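(* There is a function $C(t,\epsilon)$ such that the following holds for every positive integer $t$ and every $\epsilon\in(0,1)$: let $G$ be a connected balanced bipartite graph with parts $X,Y$ each of order $n$, with $\delta(G)\geq 3C(t,\epsilon)$ and with no induced $S_{t,t}$. Then \[\Delta_X,\ \Delta_Y\geq \left(1-\frac{C(t,\epsilon)}{\delta(G)}\right)(1-10\epsilon)\,n.\]
   Context: For positive integers $a,b$, the biclaw $S_{a,b}$ is the graph with vertex set $\{x,x_1,\dots,x_a,y,y_1,\dots,y_b\}$ and edges $xy$, $xy_1,\dots,xy_b$, $yx_1,\dots,yx_a$; "no induced $S_{t,t}$" means no induced subgraph isomorphic to $S_{t,t}$. For a bipartite graph with parts $X,Y$, $\Delta_X=\max_{x\in X} d(x)$ and $\Delta_Y=\max_{y\in Y} d(y)$. $\delta(G)$ is the minimum degree. *)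

theory Defs
  imports Complex_Main
begin

definition simple_graph :: "'a set \<Rightarrow> ('a \<Rightarrow> 'a \<Rightarrow> bool) \<Rightarrow> bool" where
  "simple_graph V E \<longleftrightarrow> finite V \<and> (\<forall>u v. E u v \<longrightarrow> u \<in> V \<and> v \<in> V)
     \<and> (\<forall>u v. E u v \<longrightarrow> E v u) \<and> (\<forall>v. \<not> E v v)"

definition connected_graph :: "'a set \<Rightarrow> ('a \<Rightarrow> 'a \<Rightarrow> bool) \<Rightarrow> bool" where
  "connected_graph V E \<longleftrightarrow> V \<noteq> {} \<and> (\<forall>u\<in>V. \<forall>v\<in>V. E\<^sup>*\<^sup>* u v)"

definition bipartition :: "'a set \<Rightarrow> ('a \<Rightarrow> 'a \<Rightarrow> bool) \<Rightarrow> 'a set \<Rightarrow> 'a set \<Rightarrow> bool" where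
  "bipartition V E X Y \<longleftrightarrow> X \<union> Y = V \<and> X \<inter> Y = {}
     \<and> (\<forall>u v. E u v \<longrightarrow> (u \<in> X \<and> v \<in> Y) \<or> (u \<in> Y \<and> v \<in> X))"

definition degree :: "'a set \<Rightarrow> ('a \<Rightarrow> 'a \<Rightarrow> bool) \<Rightarrow> 'a \<Rightarrow> nat" where
  "degree V E v = card {u \<in> V. E v u}"

definition min_degree :: "'a set \<Rightarrow> ('a \<Rightarrow> 'a \<Rightarrow> bool) \<Rightarrow> nat" where
  "min_degree V E = Min (degree V E ` V)"

definition max_degree_on :: "'a set \<Rightarrow> ('a \<Rightarrow> 'a \<Rightarrow> bool) \<Rightarrow> 'a set \<Rightarrow> nat" where
  "max_degree_on V E A = Max (degree V E ` A)"

datatype bc_vertex = BX | BY | BXi nat | BYi nat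

definition biclaw_vertices :: "nat \<Rightarrow> nat \<Rightarrow> bc_vertex set" where
  "biclaw_vertices a b = {BX, BY} \<union> BXi ` {1..a} \<union> BYi ` {1..b}"

fun biclaw_edge :: "bc_vertex \<Rightarrow> bc_vertex \<Rightarrow> bool" where
  "biclaw_edge BX BY = True"
| "biclaw_edge BY BX = True"
| "biclaw_edge BX (BYi _) = True"
| "biclaw_edge (BYi _) BX = True"
| "biclaw_edge BY (BXi _) = True"
| "biclaw_edge (BXi _) BY = True"
| "biclaw_edge _ _ = False"

definition has_induced_biclaw :: "'a set \<Rightarrow> ('a \<Rightarrow> 'a \<Rightarrow> bool) \<Rightarrow> nat \<Rightarrow> nat \<Rightarrow> bool" where
  "has_induced_biclaw V E a b \<longleftrightarrow>
     (\<exists>f. inj_on f (biclaw_vertices a b) \<and> f ` biclaw_vertices a b \<subseteq> V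
        \<and> (\<forall>u\<in>biclaw_vertices a b. \<forall>v\<in>biclaw_vertices a b.
              E (f u) (f v) \<longleftrightarrow> biclaw_edge u v))"

end

theory Submission
  imports Defs
begin


lemma dc:
  assumes "finite S" "finite T"
  shows "(\<Sum>s\<in>S. card {x\<in>T. R s x}) = (\<Sum>x\<in>T. card {s\<in>S. R s x})"
proof -
  have a: "\<And>s. card {x\<in>T. R s x} = (\<Sum>x\<in>T. if R s x then 1 else 0)"
    using assms by (simp add: sum.inter_filter[symmetric])
  have b: "\<And>x. card {s\<in>S. R s x} = (\<Sum>s\<in>S. if R s x then 1 else 0)"
    using assms by (simp add: sum.inter_filter[symmetric])
  show ?thesis unfolding a b by (rule sum.swap)
qed

lemma T2_step:
  fixes P W Z :: "'a set" and M t j :: nat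
  assumes fin: "finite P" "finite W" and Mpos: "M > 0" and cP: "2*M*t \<le> card P"
    and Z: "Z \<subseteq> P" "card Z = j" "j < t"
    and bad: "\<forall>w\<in>W. card P \<le> M * card {p\<in>P. \<not> E w p}"
  shows "\<exists>p\<in>P - Z. card W \<le> 2*M*card {w\<in>W. \<not> E w p}"
proof -
  define S where "S = P - Z"
  have finS: "finite S" using fin S_def by auto
  have finZ: "finite Z" using Z fin finite_subset by auto
  have cS: "card S = card P - j" using Z finZ S_def by (simp add: card_Diff_subset)
  have "2*M*t > 0" using Mpos Z by simp
  then have Ppos: "card P > 0" using cP by linarith
  have Sne: "S \<noteq> {}"
  proof
    assume "S = {}"
    then have "card P \<le> j" using cS by simp
    moreover have "t \<le> 2*M*t" using Mpos by simp
    ultimately show False using cP Z by linarith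
  qed
  have each: "card P \<le> 2*M*card {p\<in>S. \<not> E w p}" if w: "w\<in>W" for w
  proof -
    have "{p\<in>P. \<not> E w p} \<subseteq> {p\<in>S. \<not> E w p} \<union> Z" using S_def by auto
    then have "card {p\<in>P. \<not> E w p} \<le> card ({p\<in>S. \<not> E w p} \<union> Z)"
      by (rule card_mono[rotated]) (use finS finZ in auto)
    also have "\<dots> \<le> card {p\<in>S. \<not> E w p} + card Z" by (rule card_Un_le)
    finally have "card {p\<in>P. \<not> E w p} \<le> card {p\<in>S. \<not> E w p} + j" using Z by simp
    then have "M * card {p\<in>P. \<not> E w p} \<le> M * card {p\<in>S. \<not> E w p} + M * j"
      by (metis add_mult_distrib2 mult_le_mono2)
    moreover have "M*j \<le> M*t" using Z by simp
    moreover have "card P \<le> M * card {p\<in>P. \<not> E w p}" using bad w by auto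
    moreover have "2*(M*t) \<le> card P" using cP by (simp add: mult.assoc)
    moreover have "2*M*card {p\<in>S. \<not> E w p} = 2*(M*card {p\<in>S. \<not> E w p})" by simp
    ultimately show ?thesis by linarith
  qed
  define c where "c p = card {w\<in>W. \<not> E w p}" for p
  have "Max (c ` S) \<in> c ` S" by (rule Max_in) (use finS Sne in auto)
  then obtain p where p1: "p \<in> S" "c p = Max (c ` S)" by auto
  have p2: "c q \<le> c p" if "q \<in> S" for q
    unfolding p1(2) by (rule Max_ge) (use finS that in auto)
  note p = p1(1) p2
  have "(\<Sum>p\<in>S. c p) = (\<Sum>w\<in>W. card {p\<in>S. \<not> E w p})"
    unfolding c_def using dc[OF fin(2) finS, of "\<lambda>w p. \<not> E w p"] by simp
  then have "card W * card P \<le> 2*M*(\<Sum>p\<in>S. c p)"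
    using each sum_bounded_below[of W "card P" "\<lambda>w. 2*M*card {p\<in>S. \<not> E w p}"]
    by (simp add: sum_distrib_left mult.commute)
  also have "(\<Sum>p\<in>S. c p) \<le> card S * c p" using sum_bounded_above[of S c "c p"] p by simp
  also have "card S \<le> card P" using cS by simp
  finally have "card W * card P \<le> 2*M*(card P * c p)"
    by (meson le_trans mult_le_mono1 mult_le_mono2)
  then have "card W * card P \<le> (2*M*c p) * card P" by (simp add: ac_simps)
  then have "card W \<le> 2*M*c p" using Ppos by simp
  then show ?thesis using p(1) S_def c_def by auto
qed



lemma T2:
  fixes P Qs :: "'a set" and M t :: nat
  assumes fin: "finite P" "finite Qs" and Mpos: "M > 0" and cP: "2*M*t \<le> card P" and tpos: "t > 0"
    and hyp: "\<forall>A B. A \<subseteq> Qs \<longrightarrow> B \<subseteq> P \<longrightarrow> card A = t \<longrightarrow> card B = t \<longrightarrow> (\<exists>a\<in>A. \<exists>b\<in>B. E a b)"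
  shows "card {q\<in>Qs. card P \<le> M * card {p\<in>P. \<not> E q p}} < t*(2*M)^t"
proof (rule ccontr)
  define Bad where "Bad = {q\<in>Qs. card P \<le> M * card {p\<in>P. \<not> E q p}}"
  assume "\<not> card {q\<in>Qs. card P \<le> M * card {p\<in>P. \<not> E q p}} < t*(2*M)^t"
  then have kB: "t*(2*M)^t \<le> card Bad" unfolding Bad_def by simp
  have finB: "finite Bad" using fin Bad_def by auto
  have claim: "j \<le> t \<Longrightarrow> \<exists>Z W. Z \<subseteq> P \<and> card Z = j \<and> W \<subseteq> Bad \<and> (\<forall>w\<in>W. \<forall>z\<in>Z. \<not> E w z)
                 \<and> card Bad \<le> card W * (2*M)^j" for j
  proof (induction j)
    case 0
    show ?case by (rule exI[of _ "{}"], rule exI[of _ Bad]) simp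
  next
    case (Suc j)
    then obtain Z W where ZW: "Z \<subseteq> P" "card Z = j" "W \<subseteq> Bad" "\<forall>w\<in>W. \<forall>z\<in>Z. \<not> E w z"
      "card Bad \<le> card W * (2*M)^j" by auto
    have finW: "finite W" using ZW finB finite_subset by auto
    have badW: "\<forall>w\<in>W. card P \<le> M * card {p\<in>P. \<not> E w p}" using ZW Bad_def by auto
    obtain p where p: "p \<in> P - Z" "card W \<le> 2*M*card {w\<in>W. \<not> E w p}"
      using T2_step[OF fin(1) finW Mpos cP ZW(1) ZW(2) _ badW] Suc by auto
    define W' where "W' = {w\<in>W. \<not> E w p}"
    have finZ: "finite Z" using ZW fin finite_subset by auto
    have "card (insert p Z) = Suc j" using p finZ ZW by simp
    moreover have "insert p Z \<subseteq> P" using p ZW by auto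
    moreover have "W' \<subseteq> Bad" using ZW W'_def by auto
    moreover have "\<forall>w\<in>W'. \<forall>z\<in>insert p Z. \<not> E w z" using ZW W'_def by auto
    moreover have "card Bad \<le> card W' * (2*M)^(Suc j)"
    proof -
      have "card Bad \<le> card W * (2*M)^j" by fact
      also have "\<dots> \<le> (2*M*card W') * (2*M)^j" using p W'_def by (simp add: mult_le_mono1)
      also have "\<dots> = card W' * (2*M)^(Suc j)" by simp
      finally show ?thesis .
    qed
    ultimately show ?case by blast
  qed
  obtain Z W where ZW: "Z \<subseteq> P" "card Z = t" "W \<subseteq> Bad" "\<forall>w\<in>W. \<forall>z\<in>Z. \<not> E w z"
      "card Bad \<le> card W * (2*M)^t" using claim[of t] by auto
  have "t*(2*M)^t \<le> card W * (2*M)^t" using kB ZW by linarith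
  then have "t \<le> card W" using Mpos by simp
  then obtain A where A: "A \<subseteq> W" "card A = t" by (meson obtain_subset_with_card_n)
  have "A \<subseteq> Qs" using A ZW Bad_def by auto
  then obtain a b where "a\<in>A" "b\<in>Z" "E a b" using hyp A ZW by blast
  then show False using ZW A by auto
qed




locale bg =
  fixes V :: "'a set" and E :: "'a \<Rightarrow> 'a \<Rightarrow> bool" and X Y :: "'a set" and n t dm :: nat
  assumes sg: "simple_graph V E" and conn: "connected_graph V E" and bip: "bipartition V E X Y"
    and cX: "card X = n" and cY: "card Y = n"
    and deg: "\<And>v. v \<in> V \<Longrightarrow> dm \<le> card {u\<in>V. E v u}"
    and noanti: "\<And>x y Z W. E x y \<Longrightarrow> Z \<subseteq> {u\<in>V. E y u} - {x} \<Longrightarrow> W \<subseteq> {u\<in>V. E x u} - {y}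
        \<Longrightarrow> card Z = t \<Longrightarrow> card W = t \<Longrightarrow> \<exists>z\<in>Z. \<exists>w\<in>W. E z w"
    and tpos: "t > 0"
begin

definition N where "N v = {u\<in>V. E v u}"

lemma finV: "finite V" using sg unfolding simple_graph_def by auto
lemma Esym: "E u v \<Longrightarrow> E v u" using sg unfolding simple_graph_def by auto
lemma Eirr: "\<not> E v v" using sg unfolding simple_graph_def by auto
lemma EV: "E u v \<Longrightarrow> u \<in> V \<and> v \<in> V" using sg unfolding simple_graph_def by auto
lemma XYV: "X \<union> Y = V" and XYd: "X \<inter> Y = {}" using bip unfolding bipartition_def by auto
lemma Ecross: "E u v \<Longrightarrow> (u \<in> X \<and> v \<in> Y) \<or> (u \<in> Y \<and> v \<in> X)" using bip unfolding bipartition_def by auto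
lemma finX: "finite X" using finV XYV by (metis finite_Un)
lemma finY: "finite Y" using finV XYV by (metis finite_Un)
lemma memN: "u \<in> N v \<longleftrightarrow> E v u" unfolding N_def using EV by auto
lemma finN: "finite (N v)" unfolding N_def using finV by auto
lemma NV: "N v \<subseteq> V" unfolding N_def by auto
lemma NX: "x \<in> X \<Longrightarrow> N x \<subseteq> Y" using memN Ecross XYd by blast
lemma NY: "y \<in> Y \<Longrightarrow> N y \<subseteq> X" using memN Ecross XYd by blast
lemma degN: "v \<in> V \<Longrightarrow> dm \<le> card (N v)" unfolding N_def using deg by auto
lemma XX: "x \<in> X \<Longrightarrow> x' \<in> X \<Longrightarrow> \<not> E x x'" using Ecross XYd by blast
lemma YY: "y \<in> Y \<Longrightarrow> y' \<in> Y \<Longrightarrow> \<not> E y y'" using Ecross XYd by blast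

lemma noantiN: "E x y \<Longrightarrow> Z \<subseteq> N y - {x} \<Longrightarrow> W \<subseteq> N x - {y}
        \<Longrightarrow> card Z = t \<Longrightarrow> card W = t \<Longrightarrow> \<exists>z\<in>Z. \<exists>w\<in>W. E z w"
  using noanti unfolding N_def by blast

lemma cover:
  assumes "E a r" "W \<subseteq> N a - {r}" "card W = t"
  shows "card {z \<in> N r - {a}. \<forall>w\<in>W. \<not> E z w} < t"
proof (rule ccontr)
  assume "\<not> ?thesis"
  then obtain Z where Z: "Z \<subseteq> {z \<in> N r - {a}. \<forall>w\<in>W. \<not> E z w}" "card Z = t"
    by (meson not_less obtain_subset_with_card_n)
  then have "Z \<subseteq> N r - {a}" by auto
  from noantiN[OF assms(1) this assms(2) Z(2) assms(3)] Z(1) show False by auto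
qed

end




context bg begin

lemma core:
  fixes M K L :: nat
  assumes M8: "8 \<le> M" and Kdef: "K = t*(2*M)^t" and Ldef: "L = t + t*K"
    and d1: "2*M*t + 2 \<le> dm" and d2: "L + t + 2 \<le> dm" and d3: "t*t + t + 1 \<le> dm"
    and d4: "2*K + 8 \<le> dm"
  shows "\<exists>x0\<in>X. \<exists>c1 c2 c3. card (Y - N x0) \<le> c1 + c2 + c3 \<and> dm * c1 \<le> (t-1)*n
            \<and> M*c2 \<le> 2*n \<and> (dm - L)*c3 \<le> K*n"
proof -
  have Mpos: "M > 0" using M8 by simp
  have Vne: "V \<noteq> {}" using conn unfolding connected_graph_def by auto
  have Xne: "X \<noteq> {}"
  proof
    assume "X = {}"
    then have "n = 0" using cX by simp
    then have "Y = {}" using cY finY by simp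
    then show False using \<open>X = {}\<close> XYV Vne by simp
  qed
  define cN where "cN x = card (N x)" for x
  have "Max (cN ` X) \<in> cN ` X" by (rule Max_in) (use finX Xne in auto)
  then obtain x0 where x0X: "x0 \<in> X" and x0M: "cN x0 = Max (cN ` X)" by auto
  have Dmax0: "card (N x) \<le> card (N x0)" if "x \<in> X" for x
    using x0M Max_ge[of "cN ` X" "cN x"] finX that unfolding cN_def by auto
  define B where "B = N x0"
  define D where "D = card B"
  have BY: "B \<subseteq> Y" using NX x0X B_def by auto
  have finB: "finite B" using finN B_def by auto
  have x0V: "x0 \<in> V" using x0X XYV by auto
  have DdM: "dm \<le> D" using degN[OF x0V] B_def D_def by auto
  have Dmax: "card (N x) \<le> D" if "x \<in> X" for x using Dmax0[OF that] B_def D_def by auto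
  have Dn: "D \<le> n" using card_mono[OF finY BY] cY D_def by auto
  define U where "U = {a\<in>X. M * card (B - N a) \<le> D}"
  have x0U: "x0 \<in> U" using x0X B_def U_def by auto
  have UX: "U \<subseteq> X" using U_def by auto
  have finU: "finite U" using finX UX finite_subset by auto
  have UV: "U \<subseteq> V" using UX XYV by auto
  have NyU: "card (N y - U) < K" if y: "y \<in> B" for y
  proof -
    define P where "P = B - {y}"
    define Qs where "Qs = N y - {x0}"
    have cP: "card P = D - 1" using y finB P_def D_def by simp
    have T2app: "card {q\<in>Qs. card P \<le> M * card {p\<in>P. \<not> E q p}} < t*(2*M)^t"
    proof (rule T2)
      show "finite P" using finB P_def by auto
      show "finite Qs" using finN Qs_def by auto
      show "0 < M" by fact
      show "2*M*t \<le> card P" using cP DdM d1 by linarith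
      show "0 < t" by (rule tpos)
      show "\<forall>A B'. A \<subseteq> Qs \<longrightarrow> B' \<subseteq> P \<longrightarrow> card A = t \<longrightarrow> card B' = t \<longrightarrow> (\<exists>a\<in>A. \<exists>b\<in>B'. E a b)"
      proof (intro allI impI)
        fix A B' assume h: "A \<subseteq> Qs" "B' \<subseteq> P" "card A = t" "card B' = t"
        have "E x0 y" using y B_def memN by auto
        moreover have "A \<subseteq> N y - {x0}" using h Qs_def by auto
        moreover have "B' \<subseteq> N x0 - {y}" using h P_def B_def by auto
        ultimately show "\<exists>a\<in>A. \<exists>b\<in>B'. E a b" using noantiN h by blast
      qed
    qed
    have sub: "N y - U \<subseteq> {q\<in>Qs. card P \<le> M * card {p\<in>P. \<not> E q p}}"
    proof
      fix q assume q: "q \<in> N y - U"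
      have yY: "y \<in> Y" using y BY by auto
      have qX: "q \<in> X" using q NY[OF yY] by auto
      have qx0: "q \<noteq> x0" using q x0U by auto
      have "\<not> M * card (B - N q) \<le> D" using q qX U_def by auto
      moreover have "B - N q = {p\<in>P. \<not> E q p}"
      proof -
        have "E q y" using q memN Esym by auto
        then show ?thesis using P_def memN by auto
      qed
      ultimately have "card P \<le> M * card {p\<in>P. \<not> E q p}" using cP by simp
      then show "q \<in> {q\<in>Qs. card P \<le> M * card {p\<in>P. \<not> E q p}}" using q qx0 Qs_def by auto
    qed
    have "card (N y - U) \<le> card {q\<in>Qs. card P \<le> M * card {p\<in>P. \<not> E q p}}"
      by (rule card_mono) (use finN Qs_def sub in auto)
    then show ?thesis using T2app Kdef by linarith
  qed
  have Usplit: "card (N u \<inter> B) + card (B - N u) = D" for u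
    using card_Int_Diff[OF finB, of "N u"] D_def by (simp add: Int_commute)
  have Usplit2: "card (N u \<inter> B) + card (N u - B) = card (N u)" for u
    using card_Int_Diff[OF finN, of u B] by simp
  have Uout: "M * card (N u - B) \<le> D" if "u \<in> U" for u
  proof -
    have "card (N u) \<le> D" using that UX Dmax by auto
    then have "card (N u - B) \<le> card (B - N u)" using Usplit[of u] Usplit2[of u] by linarith
    then have "M * card (N u - B) \<le> M * card (B - N u)" by simp
    also have "\<dots> \<le> D" using that U_def by auto
    finally show ?thesis .
  qed
  have Uin8: "7 * D \<le> 8 * card (N u \<inter> B)" if "u \<in> U" for u
  proof -
    have "8 * card (B - N u) \<le> M * card (B - N u)" using M8 by simp
    also have "\<dots> \<le> D" using that U_def by auto
    finally show ?thesis using Usplit[of u] by linarith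
  qed
  have Uin: "t + 1 \<le> card (N u \<inter> B)" if "u \<in> U" for u
  proof -
    have "16*t \<le> 2*M*t" using M8 by simp
    then show ?thesis using Uin8[OF that] DdM d1 by linarith
  qed
  have Lbound: "card (N r - U) \<le> L" if W: "W \<subseteq> N a \<inter> B" "card W = t" and ar: "E a r" and rW: "r \<notin> W" for a r W
  proof -
    have finW: "finite W" using W finB finite_subset by auto
    have sub: "N r - U \<subseteq> {a} \<union> {z \<in> N r - {a}. \<forall>w\<in>W. \<not> E z w} \<union> (\<Union>w\<in>W. N w - U)"
    proof
      fix z assume z: "z \<in> N r - U"
      show "z \<in> {a} \<union> {z \<in> N r - {a}. \<forall>w\<in>W. \<not> E z w} \<union> (\<Union>w\<in>W. N w - U)"
      proof (cases "z = a \<or> (\<forall>w\<in>W. \<not> E z w)")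
        case True then show ?thesis using z by auto
      next
        case False
        then obtain w where "w \<in> W" "E z w" by auto
        then show ?thesis using z memN Esym by blast
      qed
    qed
    have c2: "card {z \<in> N r - {a}. \<forall>w\<in>W. \<not> E z w} < t"
      by (rule cover[OF ar]) (use W rW in auto)
    have "card (\<Union>w\<in>W. N w - U) \<le> (\<Sum>w\<in>W. card (N w - U))" by (rule card_UN_le[OF finW])
    also have "\<dots> \<le> card W * K"
      using sum_bounded_above[of W "\<lambda>w. card (N w - U)" K] NyU W by (simp add: less_imp_le subset_iff)
    finally have c3: "card (\<Union>w\<in>W. N w - U) \<le> t * K" using W by simp
    have "card (N r - U) \<le> card ({a} \<union> {z \<in> N r - {a}. \<forall>w\<in>W. \<not> E z w} \<union> (\<Union>w\<in>W. N w - U))"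
      by (rule card_mono[OF _ sub]) (use finN finW in auto)
    also have "\<dots> \<le> card ({a} \<union> {z \<in> N r - {a}. \<forall>w\<in>W. \<not> E z w}) + card (\<Union>w\<in>W. N w - U)"
      by (rule card_Un_le)
    also have "\<dots> \<le> 1 + card {z \<in> N r - {a}. \<forall>w\<in>W. \<not> E z w} + card (\<Union>w\<in>W. N w - U)"
      using card_Un_le[of "{a}" "{z \<in> N r - {a}. \<forall>w\<in>W. \<not> E z w}"] by simp
    finally show ?thesis using c2 c3 Ldef by linarith
  qed
  have QU: "dm - L \<le> card (N r \<inter> U)" if u: "u \<in> U" and ur: "E u r" for u r
  proof -
    have "t \<le> card ((N u \<inter> B) - {r})" using Uin[OF u] by (auto simp: card_Diff_singleton_if)
    then obtain W where W: "W \<subseteq> (N u \<inter> B) - {r}" "card W = t" by (meson obtain_subset_with_card_n)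
    have "card (N r - U) \<le> L" by (rule Lbound[of W u r]) (use W ur in auto)
    moreover have "dm \<le> card (N r)" using degN EV ur by auto
    moreover have "card (N r) = card (N r \<inter> U) + card (N r - U)" using card_Int_Diff[OF finN, of r U] by simp
    ultimately show ?thesis by linarith
  qed
  define Q where "Q = {y\<in>Y. \<exists>u\<in>U. E u y}"
  define A where "A = {a\<in>X. \<exists>y\<in>Q. E a y}"
  have QY: "Q \<subseteq> Y" using Q_def by auto
  have AX: "A \<subseteq> X" using A_def by auto
  have Aout: "card (N a - Q) < t" if a: "a \<in> A" for a
  proof (rule ccontr)
    assume "\<not> ?thesis"
    then obtain W where W: "W \<subseteq> N a - Q" "card W = t" by (meson not_less obtain_subset_with_card_n)
    obtain y where y: "y \<in> Q" "E a y" using a A_def by auto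
    obtain u where u: "u \<in> U" "E u y" using y Q_def by auto
    have "dm - L \<le> card (N y \<inter> U)" using QU[OF u] .
    then have "t \<le> card ((N y \<inter> U) - {a})" using d2 by (auto simp: card_Diff_singleton_if)
    then obtain Z where Z: "Z \<subseteq> (N y \<inter> U) - {a}" "card Z = t" by (meson obtain_subset_with_card_n)
    have "\<exists>z\<in>Z. \<exists>w\<in>W. E z w" by (rule noantiN[OF y(2) _ _ Z(2) W(2)]) (use Z W y in auto)
    then obtain z w where zw: "z \<in> Z" "w \<in> W" "E z w" by auto
    have "a \<in> X" using a A_def by auto
    then have "w \<in> Y" using zw W NX by auto
    then have "w \<in> Q" using zw Z Q_def by auto
    then show False using zw W by auto
  qed
  have T1in: "card (N r - A) < t" if a: "a \<in> A" and ar: "E a r" and rQ: "r \<notin> Q" for a r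
  proof -
    have "dm \<le> card (N a)" using degN EV ar by auto
    moreover have "card (N a) = card (N a \<inter> Q) + card (N a - Q)" using card_Int_Diff[OF finN, of a Q] by simp
    ultimately have "t \<le> card (N a \<inter> Q)" using Aout[OF a] d2 Ldef by linarith
    then obtain W where W: "W \<subseteq> N a \<inter> Q" "card W = t" by (meson obtain_subset_with_card_n)
    have c: "card {z \<in> N r - {a}. \<forall>w\<in>W. \<not> E z w} < t" by (rule cover[OF ar]) (use W rQ in auto)
    have aX: "a \<in> X" using a A_def by auto
    have rY: "r \<in> Y" using ar aX Ecross XYd by blast
    have "N r - A \<subseteq> {z \<in> N r - {a}. \<forall>w\<in>W. \<not> E z w}"
    proof
      fix z assume z: "z \<in> N r - A"
      have zX: "z \<in> X" using z NY[OF rY] by auto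
      have "\<forall>w\<in>W. \<not> E z w" using z zX W A_def by auto
      then show "z \<in> {z \<in> N r - {a}. \<forall>w\<in>W. \<not> E z w}" using z a by auto
    qed
    then have "card (N r - A) \<le> card {z \<in> N r - {a}. \<forall>w\<in>W. \<not> E z w}"
      by (rule card_mono[rotated]) (use finN in auto)
    then show ?thesis using c by linarith
  qed
  have noST: "\<not> E s r" if s: "s \<in> X" "s \<notin> A" and a: "a \<in> A" and ar: "E a r" and rQ: "r \<notin> Q" for s a r
  proof
    assume sr: "E s r"
    have "dm \<le> card (N r)" using degN EV ar by auto
    moreover have "card (N r) = card (N r \<inter> A) + card (N r - A)" using card_Int_Diff[OF finN, of r A] by simp
    ultimately have "t \<le> card (N r \<inter> A)" using T1in[OF a ar rQ] d2 Ldef by linarith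
    then obtain Z where Z: "Z \<subseteq> N r \<inter> A" "card Z = t" by (meson obtain_subset_with_card_n)
    have finZ: "finite Z" using Z finN finite_subset by blast
    define Bd where "Bd = (\<Union>z\<in>Z. N z - Q)"
    have "card Bd \<le> (\<Sum>z\<in>Z. card (N z - Q))" unfolding Bd_def by (rule card_UN_le[OF finZ])
    also have "\<dots> \<le> card Z * (t - 1)"
    proof -
      have "\<And>z. z \<in> Z \<Longrightarrow> card (N z - Q) \<le> t - 1" using Aout Z by fastforce
      then show ?thesis using sum_bounded_above[of Z "\<lambda>z. card (N z - Q)" "t - 1"] by simp
    qed
    finally have cBd: "card Bd \<le> t * (t - 1)" using Z by simp
    have "card (N s) \<le> card ((N s - {r} - Bd) \<union> ({r} \<union> Bd))" by (rule card_mono) (use finN finZ Bd_def finN in auto)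
    also have "\<dots> \<le> card (N s - {r} - Bd) + card ({r} \<union> Bd)" by (rule card_Un_le)
    also have "\<dots> \<le> card (N s - {r} - Bd) + 1 + card Bd" using card_Un_le[of "{r}" Bd] by simp
    finally have "card (N s) \<le> card (N s - {r} - Bd) + 1 + card Bd" .
    moreover have "dm \<le> card (N s)" using degN EV sr by auto
    moreover have "t * (t - 1) + t \<le> t * t" by (simp add: algebra_simps)
    ultimately have "t \<le> card (N s - {r} - Bd)" using cBd d3 by linarith
    then obtain W where W: "W \<subseteq> N s - {r} - Bd" "card W = t" by (meson obtain_subset_with_card_n)
    have sZ: "s \<notin> Z" using Z s by auto
    have "\<exists>z\<in>Z. \<exists>w\<in>W. E z w" by (rule noantiN[OF sr _ _ Z(2) W(2)]) (use Z W sZ in auto)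
    then obtain z w where zw: "z \<in> Z" "w \<in> W" "E z w" by auto
    have wNs: "w \<in> N s" using zw W by auto
    have "w \<notin> Q" using wNs s A_def memN by auto
    then have "w \<in> Bd" using zw memN Bd_def by auto
    then show False using zw W by auto
  qed
  define Comp where "Comp = A \<union> Q \<union> {r\<in>Y. r \<notin> Q \<and> (\<exists>a\<in>A. E a r)}"
  have clos: "v \<in> Comp" if uv: "E u v" and uC: "u \<in> Comp" for u v
  proof -
    consider (a) "u \<in> A" | (q) "u \<in> Q" | (r) "u \<in> Y" "u \<notin> Q" "\<exists>a\<in>A. E a u" using uC Comp_def by auto
    then show ?thesis
    proof cases
      case a
      then have "v \<in> Y" using uv AX Ecross XYd by blast
      then show ?thesis using a uv Comp_def by auto
    next
      case q
      then have "v \<in> X" using uv QY Ecross XYd by blast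
      then show ?thesis using q uv Comp_def A_def Esym by blast
    next
      case r
      then have vX: "v \<in> X" using uv Ecross XYd by blast
      show ?thesis
      proof (rule ccontr)
        assume "v \<notin> Comp"
        then have "v \<notin> A" using Comp_def by auto
        then show False using noST[OF vX \<open>v \<notin> A\<close>] r uv Esym by blast
      qed
    qed
  qed
  have x0A: "x0 \<in> A"
  proof -
    have "B \<noteq> {}" using DdM d1 D_def by auto
    then obtain y where y: "y \<in> B" by auto
    have "E x0 y" using y B_def memN by auto
    then have "y \<in> Q" using y BY x0U Q_def by auto
    then show ?thesis using \<open>E x0 y\<close> x0X A_def by auto
  qed
  have reach: "E\<^sup>*\<^sup>* x0 v \<Longrightarrow> v \<in> Comp" for v
  proof (induction rule: rtranclp_induct)
    case base then show ?case using x0A Comp_def by auto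
  next
    case (step y z) then show ?case using clos by blast
  qed
  have XA: "X \<subseteq> A"
  proof
    fix v assume v: "v \<in> X"
    then have "E\<^sup>*\<^sup>* x0 v" using conn x0V XYV unfolding connected_graph_def by auto
    then have "v \<in> Comp" by (rule reach)
    then show "v \<in> A" using v QY XYd Comp_def by auto
  qed
  have c1: "dm * card (Y - Q) \<le> (t - 1) * n"
  proof -
    have finYQ: "finite (Y - Q)" using finY by auto
    have eq: "(\<Sum>r\<in>Y - Q. card {a\<in>X. E r a}) = (\<Sum>a\<in>X. card {r\<in>Y - Q. E r a})"
      by (rule dc[OF finYQ finX])
    have lb: "dm \<le> card {a\<in>X. E r a}" if r: "r \<in> Y - Q" for r
    proof -
      have "{a\<in>X. E r a} = N r" using NY[of r] r memN by auto
      then show "dm \<le> card {a\<in>X. E r a}" using degN r XYV by auto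
    qed
    have "card (Y - Q) * dm \<le> (\<Sum>r\<in>Y - Q. card {a\<in>X. E r a})"
      using sum_bounded_below[of "Y - Q" dm "\<lambda>r. card {a\<in>X. E r a}"] lb by simp
    also have "\<dots> = (\<Sum>a\<in>X. card {r\<in>Y - Q. E r a})" by (rule eq)
    also have "\<dots> \<le> card X * (t - 1)"
    proof -
      have ub: "card {r\<in>Y - Q. E r a} \<le> t - 1" if a: "a \<in> X" for a
      proof -
        have "{r\<in>Y - Q. E r a} \<subseteq> N a - Q" using memN Esym by auto
        then have "card {r\<in>Y - Q. E r a} \<le> card (N a - Q)" by (rule card_mono[rotated]) (use finN in auto)
        then show "card {r\<in>Y - Q. E r a} \<le> t - 1" using Aout a XA by fastforce
      qed
      then show ?thesis using sum_bounded_above[of X "\<lambda>a. card {r\<in>Y - Q. E r a}" "t - 1"] by simp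
    qed
    finally show ?thesis using cX by (simp add: mult.commute)
  qed
  have Upos: "card U > 0" using x0U finU by (auto simp: card_gt_0_iff)
  define H where "H = {r \<in> Y - B. card U \<le> 2 * card (N r \<inter> U)}"
  have NrU: "N r \<inter> U = {u\<in>U. E r u}" for r using memN UV by auto
  have eUB: "M * (\<Sum>r\<in>Y - B. card (N r \<inter> U)) \<le> card U * D"
  proof -
    have "(\<Sum>r\<in>Y - B. card {u\<in>U. E r u}) = (\<Sum>u\<in>U. card {r\<in>Y - B. E r u})"
      by (rule dc) (use finY finU in auto)
    moreover have "M * (\<Sum>u\<in>U. card {r\<in>Y - B. E r u}) \<le> card U * D"
    proof -
      have ub: "M * card {r\<in>Y - B. E r u} \<le> D" if u: "u \<in> U" for u
      proof -
        have "{r\<in>Y - B. E r u} \<subseteq> N u - B" using memN Esym by auto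
        then have "card {r\<in>Y - B. E r u} \<le> card (N u - B)" by (rule card_mono[rotated]) (use finN in auto)
        then show ?thesis using Uout[OF u] by (meson le_trans mult_le_mono2)
      qed
      have "M * (\<Sum>u\<in>U. card {r\<in>Y - B. E r u}) = (\<Sum>u\<in>U. M * card {r\<in>Y - B. E r u})"
        by (simp add: sum_distrib_left)
      also have "\<dots> \<le> card U * D" using sum_bounded_above[of U "\<lambda>u. M * card {r\<in>Y - B. E r u}" D] ub by simp
      finally show ?thesis .
    qed
    ultimately show ?thesis using NrU by simp
  qed
  have c2: "M * card H \<le> 2 * n"
  proof -
    have finH: "finite H" using finY H_def by auto
    have "card H * card U \<le> (\<Sum>r\<in>H. 2 * card (N r \<inter> U))"
      using sum_bounded_below[of H "card U" "\<lambda>r. 2 * card (N r \<inter> U)"] H_def by simp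
    also have "\<dots> \<le> (\<Sum>r\<in>Y - B. 2 * card (N r \<inter> U))"
      by (rule sum_mono2) (use finY H_def in auto)
    also have "\<dots> = 2 * (\<Sum>r\<in>Y - B. card (N r \<inter> U))" by (simp add: sum_distrib_left)
    finally have "M * (card H * card U) \<le> M * (2 * (\<Sum>r\<in>Y - B. card (N r \<inter> U)))" by simp
    also have "\<dots> \<le> 2 * (card U * D)" using eUB by simp
    finally have "(M * card H) * card U \<le> (2 * D) * card U" by (simp add: ac_simps)
    then have "M * card H \<le> 2 * D" using Upos by simp
    then show ?thesis using Dn by linarith
  qed
  define Bh where "Bh = {y\<in>B. 4 * card (U - N y) \<le> card U}"
  have UmN: "U - N y = {u\<in>U. \<not> E y u}" for y using memN UV by auto
  have BmN: "B - N u = {y\<in>B. \<not> E y u}" for u using memN Esym BY by blast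
  have BhEx: "\<exists>y. y \<in> N u \<and> y \<in> Bh" if u: "u \<in> U" for u
  proof (rule ccontr)
    assume no: "\<not> ?thesis"
    have S1: "M * (\<Sum>y\<in>B. card (U - N y)) \<le> card U * D"
    proof -
      have "(\<Sum>y\<in>B. card {u\<in>U. \<not> E y u}) = (\<Sum>u\<in>U. card {y\<in>B. \<not> E y u})"
        by (rule dc) (use finB finU in auto)
      then have "(\<Sum>y\<in>B. card (U - N y)) = (\<Sum>u\<in>U. card (B - N u))" using UmN BmN by simp
      moreover have "M * (\<Sum>u\<in>U. card (B - N u)) \<le> card U * D"
      proof -
        have "M * (\<Sum>u\<in>U. card (B - N u)) = (\<Sum>u\<in>U. M * card (B - N u))" by (simp add: sum_distrib_left)
        also have "\<dots> \<le> card U * D" using sum_bounded_above[of U "\<lambda>u. M * card (B - N u)" D] U_def by simp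
        finally show ?thesis .
      qed
      ultimately show ?thesis by simp
    qed
    have "card (B - Bh) * card U \<le> (\<Sum>y\<in>B - Bh. 4 * card (U - N y))"
      using sum_bounded_below[of "B - Bh" "card U" "\<lambda>y. 4 * card (U - N y)"] Bh_def by force
    also have "\<dots> \<le> (\<Sum>y\<in>B. 4 * card (U - N y))" by (rule sum_mono2) (use finB in auto)
    also have "\<dots> = 4 * (\<Sum>y\<in>B. card (U - N y))" by (simp add: sum_distrib_left)
    finally have "M * (card (B - Bh) * card U) \<le> M * (4 * (\<Sum>y\<in>B. card (U - N y)))" by simp
    also have "\<dots> \<le> 4 * (card U * D)" using S1 by simp
    finally have "(M * card (B - Bh)) * card U \<le> (4 * D) * card U" by (simp add: ac_simps)
    then have m4: "M * card (B - Bh) \<le> 4 * D" using Upos by simp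
    have "N u \<inter> B \<subseteq> B - Bh" using no by auto
    then have "card (N u \<inter> B) \<le> card (B - Bh)" by (rule card_mono[rotated]) (use finB in auto)
    then have "8 * card (N u \<inter> B) \<le> M * card (B - Bh)" using M8 by (meson le_trans mult_le_mono)
    then have "8 * card (N u \<inter> B) \<le> 4 * D" using m4 by linarith
    moreover have "7 * D \<le> 8 * card (N u \<inter> B)" using Uin8[OF u] .
    moreover have "D > 0" using DdM d1 by linarith
    ultimately show False by linarith
  qed
  have light: "card {q \<in> N u. q \<in> Y - B \<and> q \<notin> H} < K" if u: "u \<in> U" for u
  proof -
    obtain y where y: "y \<in> N u" "y \<in> Bh" using BhEx[OF u] by auto
    have yB: "y \<in> B" using y Bh_def by auto
    have uy: "E u y" using y memN by auto
    define P where "P = N y - {u}"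
    define Qs where "Qs = N u - {y}"
    have yV: "y \<in> V" using EV uy by auto
    have cP: "card P = card (N y) - 1" using uy memN Esym finN P_def by auto
    have T2app: "card {q\<in>Qs. card P \<le> M * card {p\<in>P. \<not> E q p}} < t*(2*M)^t"
    proof (rule T2)
      show "finite P" using finN P_def by auto
      show "finite Qs" using finN Qs_def by auto
      show "0 < M" by fact
      show "2*M*t \<le> card P" using cP degN[OF yV] d1 by linarith
      show "0 < t" by (rule tpos)
      show "\<forall>A' B'. A' \<subseteq> Qs \<longrightarrow> B' \<subseteq> P \<longrightarrow> card A' = t \<longrightarrow> card B' = t \<longrightarrow> (\<exists>a\<in>A'. \<exists>b\<in>B'. E a b)"
      proof (intro allI impI)
        fix A' B' assume h: "A' \<subseteq> Qs" "B' \<subseteq> P" "card A' = t" "card B' = t"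
        have "B' \<subseteq> N y - {u}" using h P_def by auto
        moreover have "A' \<subseteq> N u - {y}" using h Qs_def by auto
        ultimately have "\<exists>z\<in>B'. \<exists>w\<in>A'. E z w" using noantiN[OF uy] h by blast
        then show "\<exists>a\<in>A'. \<exists>b\<in>B'. E a b" using Esym by blast
      qed
    qed
    have cU1: "card (N y \<inter> U) + card (U - N y) = card U"
      using card_Int_Diff[OF finU, of "N y"] by (simp add: Int_commute)
    have cU2: "card (N y) = card (N y \<inter> U) + card (N y - U)" using card_Int_Diff[OF finN, of y U] by simp
    have cNyU: "card (N y - U) < K" using NyU[OF yB] .
    have m4: "4 * card (U - N y) \<le> card U" using y Bh_def by auto
    have dmy: "dm \<le> card (N y)" using degN[OF yV] .
    have cUge: "card (N y \<inter> U) \<le> card U" using cU1 by linarith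
    have sub: "{q \<in> N u. q \<in> Y - B \<and> q \<notin> H} \<subseteq> {q\<in>Qs. card P \<le> M * card {p\<in>P. \<not> E q p}}"
    proof
      fix q assume q: "q \<in> {q \<in> N u. q \<in> Y - B \<and> q \<notin> H}"
      have qQs: "q \<in> Qs" using q yB Qs_def by auto
      have "card P \<le> M * card {p\<in>P. \<not> E q p}"
      proof (rule ccontr)
        assume "\<not> ?thesis"
        then have lt: "M * card {p\<in>P. \<not> E q p} < card P" by simp
        define b where "b = card {p\<in>P. \<not> E q p}"
        have ltb: "M * b < card P" using lt b_def by simp
        have "8 * b \<le> M * b" using M8 by simp
        then have b8: "8 * b < card U + K" using ltb cP cU2 cNyU cUge by linarith
        have "(N y \<inter> U) - {u} - {p\<in>P. \<not> E q p} \<subseteq> N q \<inter> U" using P_def memN Esym by auto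
        then have "card ((N y \<inter> U) - {u} - {p\<in>P. \<not> E q p}) \<le> card (N q \<inter> U)"
          by (rule card_mono[rotated]) (use finU in auto)
        moreover have "card (N y \<inter> U) \<le> card ((N y \<inter> U) - {u} - {p\<in>P. \<not> E q p}) + 1 + b"
        proof -
          have "card (N y \<inter> U) \<le> card (((N y \<inter> U) - {u} - {p\<in>P. \<not> E q p}) \<union> ({u} \<union> {p\<in>P. \<not> E q p}))"
            by (rule card_mono) (use finU finN P_def in auto)
          also have "\<dots> \<le> card ((N y \<inter> U) - {u} - {p\<in>P. \<not> E q p}) + card ({u} \<union> {p\<in>P. \<not> E q p})"
            by (rule card_Un_le)
          also have "\<dots> \<le> card ((N y \<inter> U) - {u} - {p\<in>P. \<not> E q p}) + (1 + b)"
            using card_Un_le[of "{u}" "{p\<in>P. \<not> E q p}"] b_def by simp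
          finally show ?thesis by simp
        qed
        moreover have "dm - K \<le> card U" using dmy cU2 cNyU cUge by linarith
        ultimately have "card U \<le> 2 * card (N q \<inter> U)" using b8 m4 cU1 d4 by linarith
        then have "q \<in> H" using q H_def by auto
        then show False using q by auto
      qed
      then show "q \<in> {q\<in>Qs. card P \<le> M * card {p\<in>P. \<not> E q p}}" using qQs by auto
    qed
    have "card {q \<in> N u. q \<in> Y - B \<and> q \<notin> H} \<le> card {q\<in>Qs. card P \<le> M * card {p\<in>P. \<not> E q p}}"
      by (rule card_mono[OF _ sub]) (use finN Qs_def in auto)
    then show ?thesis using T2app Kdef by linarith
  qed
  define L' where "L' = {r \<in> Y - B. r \<in> Q \<and> r \<notin> H}"
  have c3: "(dm - L) * card L' \<le> K * n"
  proof -
    have finL': "finite L'" using finY L'_def by auto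
    have lb: "dm - L \<le> card {u\<in>U. E r u}" if r: "r \<in> L'" for r
    proof -
      obtain u where "u \<in> U" "E u r" using r L'_def Q_def by auto
      then show ?thesis using QU NrU by metis
    qed
    have "card L' * (dm - L) \<le> (\<Sum>r\<in>L'. card {u\<in>U. E r u})"
      using sum_bounded_below[of L' "dm - L" "\<lambda>r. card {u\<in>U. E r u}"] lb by simp
    also have "\<dots> = (\<Sum>u\<in>U. card {r\<in>L'. E r u})" by (rule dc[OF finL' finU])
    also have "\<dots> \<le> card U * K"
    proof -
      have ub: "card {r\<in>L'. E r u} \<le> K" if u: "u \<in> U" for u
      proof -
        have "{r\<in>L'. E r u} \<subseteq> {q \<in> N u. q \<in> Y - B \<and> q \<notin> H}" using L'_def memN Esym by auto
        then have "card {r\<in>L'. E r u} \<le> card {q \<in> N u. q \<in> Y - B \<and> q \<notin> H}"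
          by (rule card_mono[rotated]) (use finN in auto)
        then show ?thesis using light[OF u] by linarith
      qed
      then show ?thesis using sum_bounded_above[of U "\<lambda>u. card {r\<in>L'. E r u}" K] by simp
    qed
    also have "\<dots> \<le> n * K" using card_mono[OF finX UX] cX by simp
    finally show ?thesis by (simp add: ac_simps)
  qed
  have "Y - N x0 \<subseteq> (Y - Q) \<union> H \<union> L'" using B_def H_def L'_def by auto
  then have "card (Y - N x0) \<le> card ((Y - Q) \<union> H \<union> L')" by (rule card_mono[rotated]) (use finY H_def L'_def in auto)
  also have "\<dots> \<le> card (Y - Q) + card H + card L'"
    by (metis card_Un_le add_le_mono1 le_trans)
  finally show ?thesis using x0X c1 c2 c3 by blast
qed

end



lemma notri:
  assumes sg: "simple_graph V E" and bip: "bipartition V E X Y"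
  shows "E a c \<Longrightarrow> E b c \<Longrightarrow> \<not> E a b"
  using bip unfolding bipartition_def by blast

lemma noanti_of:
  assumes sg: "simple_graph V E" and bip: "bipartition V E X Y" and nb: "\<not> has_induced_biclaw V E t t"
    and xy: "E x y" and Z: "Z \<subseteq> {u\<in>V. E y u} - {x}" and W: "W \<subseteq> {u\<in>V. E x u} - {y}"
    and cZ: "card Z = t" and cW: "card W = t"
  shows "\<exists>z\<in>Z. \<exists>w\<in>W. E z w"
proof (rule ccontr)
  assume anti: "\<not> ?thesis"
  have finV: "finite V" using sg unfolding simple_graph_def by auto
  have Es: "\<And>u v. E u v \<Longrightarrow> E v u" using sg unfolding simple_graph_def by auto
  have Ei: "\<And>v. \<not> E v v" using sg unfolding simple_graph_def by auto
  have EV: "\<And>u v. E u v \<Longrightarrow> u \<in> V \<and> v \<in> V" using sg unfolding simple_graph_def by auto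
  have nt: "\<And>a b c. E a c \<Longrightarrow> E b c \<Longrightarrow> \<not> E a b" using notri[OF sg bip] by blast
  have finZ: "finite Z" by (rule finite_subset[OF _ finV]) (use Z in auto)
  have finW: "finite W" by (rule finite_subset[OF _ finV]) (use W in auto)
  obtain gz where gz: "bij_betw gz {1..t} Z" using ex_bij_betw_nat_finite_1[OF finZ] cZ by auto
  obtain gw where gw: "bij_betw gw {1..t} W" using ex_bij_betw_nat_finite_1[OF finW] cW by auto
  have gzZ: "i \<in> {1..t} \<Longrightarrow> gz i \<in> Z" for i using gz bij_betwE by blast
  have gwW: "i \<in> {1..t} \<Longrightarrow> gw i \<in> W" for i using gw bij_betwE by blast
  have gzi: "i \<in> {1..t} \<Longrightarrow> j \<in> {1..t} \<Longrightarrow> gz i = gz j \<Longrightarrow> i = j" for i j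
    using gz unfolding bij_betw_def inj_on_def by blast
  have gwi: "i \<in> {1..t} \<Longrightarrow> j \<in> {1..t} \<Longrightarrow> gw i = gw j \<Longrightarrow> i = j" for i j
    using gw unfolding bij_betw_def inj_on_def by blast
  have zfacts: "z \<in> V \<and> E y z \<and> z \<noteq> x \<and> z \<noteq> y \<and> \<not> E x z \<and> (\<forall>w\<in>W. \<not> E z w \<and> z \<noteq> w)" if "z \<in> Z" for z
  proof -
    have yz: "E y z" "z \<in> V" "z \<noteq> x" using that Z by auto
    have "\<not> E x z" using nt[OF xy Es[OF yz(1)]] .
    moreover have "\<forall>w\<in>W. \<not> E z w \<and> z \<noteq> w"
    proof
      fix w assume w: "w \<in> W"
      have "E x w" using w W by auto
      have "\<not> E z w" using anti that w by auto
      moreover have "z \<noteq> w" using \<open>E x w\<close> \<open>\<not> E x z\<close> by auto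
      ultimately show "\<not> E z w \<and> z \<noteq> w" by simp
    qed
    ultimately show ?thesis using yz Ei by auto
  qed
  have wfacts: "w \<in> V \<and> E x w \<and> w \<noteq> x \<and> w \<noteq> y \<and> \<not> E y w" if "w \<in> W" for w
  proof -
    have xw: "E x w" "w \<in> V" "w \<noteq> y" using that W by auto
    have "\<not> E y w" using nt[OF Es[OF xy] Es[OF xw(1)]] .
    then show ?thesis using xw Ei by auto
  qed
  have ZZ: "\<not> E z z'" if "z \<in> Z" "z' \<in> Z" for z z'
  proof -
    have "E y z" "E y z'" using that zfacts by auto
    then show ?thesis using nt[OF Es Es] by blast
  qed
  have WW: "\<not> E w w'" if "w \<in> W" "w' \<in> W" for w w'
  proof -
    have "E x w" "E x w'" using that wfacts by auto
    then show ?thesis using nt[OF Es Es] by blast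
  qed
  have xy': "x \<noteq> y" "x \<in> V" "y \<in> V" using xy Ei EV by auto
  define T where "T = {1..t}"
  have F1: "gz i \<noteq> x" "gz i \<noteq> y" "E y (gz i)" "E (gz i) y" "\<not> E x (gz i)" "\<not> E (gz i) x" "gz i \<in> V"
    if "i \<in> T" for i
  proof -
    have "gz i \<in> Z" using that T_def gzZ by auto
    then have a: "gz i \<in> V \<and> E y (gz i) \<and> gz i \<noteq> x \<and> gz i \<noteq> y \<and> \<not> E x (gz i)" using zfacts by blast
    then show "gz i \<noteq> x" "gz i \<noteq> y" "E y (gz i)" "\<not> E x (gz i)" "gz i \<in> V" by auto
    show "E (gz i) y" using a Es by metis
    show "\<not> E (gz i) x" using a Es by metis
  qed
  have F2: "gw i \<noteq> x" "gw i \<noteq> y" "E x (gw i)" "E (gw i) x" "\<not> E y (gw i)" "\<not> E (gw i) y" "gw i \<in> V"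
    if "i \<in> T" for i
  proof -
    have "gw i \<in> W" using that T_def gwW by auto
    then have a: "gw i \<in> V \<and> E x (gw i) \<and> gw i \<noteq> x \<and> gw i \<noteq> y \<and> \<not> E y (gw i)" using wfacts by blast
    then show "gw i \<noteq> x" "gw i \<noteq> y" "E x (gw i)" "\<not> E y (gw i)" "gw i \<in> V" by auto
    show "E (gw i) x" using a Es by metis
    show "\<not> E (gw i) y" using a Es by metis
  qed
  have F3: "gz i \<noteq> gw j" "gw j \<noteq> gz i" "\<not> E (gz i) (gw j)" "\<not> E (gw j) (gz i)" "\<not> E (gz i) (gz j)" "\<not> E (gw i) (gw j)"
    if "i \<in> T" "j \<in> T" for i j
  proof -
    have m: "gz i \<in> Z" "gz j \<in> Z" "gw i \<in> W" "gw j \<in> W" using that T_def gzZ gwW by auto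
    have a: "\<not> E (gz i) (gw j) \<and> gz i \<noteq> gw j" using zfacts[OF m(1)] m(4) by auto
    show "gz i \<noteq> gw j" "gw j \<noteq> gz i" "\<not> E (gz i) (gw j)" using a by auto
    show "\<not> E (gw j) (gz i)" using a Es by metis
    show "\<not> E (gz i) (gz j)" using ZZ[OF m(1) m(2)] .
    show "\<not> E (gw i) (gw j)" using WW[OF m(3) m(4)] .
  qed
  have F4: "gz i = gz j \<longleftrightarrow> i = j" "gw i = gw j \<longleftrightarrow> i = j" if "i \<in> T" "j \<in> T" for i j
    using gzi gwi that unfolding T_def by blast+
  have xyE: "E x y" "E y x" "\<not> E x x" "\<not> E y y" "x \<noteq> y" "y \<noteq> x" "x \<in> V" "y \<in> V"
    using xy Es[OF xy] Ei xy' by auto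
  have BV: "u \<in> biclaw_vertices t t \<longleftrightarrow> (u = BX \<or> u = BY \<or> (\<exists>i\<in>T. u = BXi i) \<or> (\<exists>i\<in>T. u = BYi i))" for u
    unfolding biclaw_vertices_def T_def by auto
  define f where "f v = (case v of BX \<Rightarrow> x | BY \<Rightarrow> y | BXi i \<Rightarrow> gz i | BYi j \<Rightarrow> gw j)" for v
  have fs: "f BX = x" "f BY = y" "f (BXi i) = gz i" "f (BYi i) = gw i" for i unfolding f_def by auto
  have "has_induced_biclaw V E t t"
    unfolding has_induced_biclaw_def
  proof (intro exI conjI)
    show "inj_on f (biclaw_vertices t t)"
    proof (rule inj_onI)
      fix u v assume u: "u \<in> biclaw_vertices t t" and v: "v \<in> biclaw_vertices t t" and e: "f u = f v"
      from u v show "u = v"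
        unfolding BV
      proof (elim disjE bexE)
      qed (use e fs F1 F2 F3 F4 xyE in \<open>simp_all\<close>)
    qed
    show "f ` biclaw_vertices t t \<subseteq> V"
    proof
      fix w assume "w \<in> f ` biclaw_vertices t t"
      then obtain u where u: "u \<in> biclaw_vertices t t" "w = f u" by auto
      from u(1) show "w \<in> V" unfolding BV
      proof (elim disjE bexE)
      qed (use u(2) fs F1 F2 xyE in \<open>simp_all\<close>)
    qed
    show "\<forall>u\<in>biclaw_vertices t t. \<forall>v\<in>biclaw_vertices t t. E (f u) (f v) = biclaw_edge u v"
    proof (intro ballI)
      fix u v assume u: "u \<in> biclaw_vertices t t" and v: "v \<in> biclaw_vertices t t"
      from u v show "E (f u) (f v) = biclaw_edge u v"
        unfolding BV
      proof (elim disjE bexE)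
      qed (use fs F1 F2 F3 xyE in \<open>simp_all\<close>)
    qed
  qed
  then show False using nb by simp
qed




context bg begin

lemma fin:
  fixes \<epsilon> :: real and M K L Nb :: nat
  assumes e0: "0 < \<epsilon>" and e1: "\<epsilon> < 1" and Mdef: "M = nat \<lceil>2/\<epsilon>\<rceil> + 8" and Kdef: "K = t*(2*M)^t"
    and Ldef: "L = t + t*K"
    and Nbdef: "Nb = 2*M*t + 2 + L + t + 2 + t*t + t + 1 + 2*K + 8 + K + L"
    and big: "real Nb \<le> \<epsilon> * real dm"
  shows "\<exists>x0\<in>X. (1 - 3*\<epsilon>) * real n \<le> real (card {u\<in>V. E x0 u})"
proof -
  have "\<epsilon> * real dm \<le> 1 * real dm" by (rule mult_right_mono) (use e1 in auto)
  then have "real Nb \<le> real dm" using big by linarith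
  then have Nbdm: "Nb \<le> dm" by simp
  obtain x0 c1 c2 c3 where x0: "x0 \<in> X" and cs: "card (Y - N x0) \<le> c1 + c2 + c3"
    and h1: "dm * c1 \<le> (t-1)*n" and h2: "M*c2 \<le> 2*n" and h3: "(dm - L)*c3 \<le> K*n"
  proof -
    have "8 \<le> M" using Mdef by simp
    moreover have "2*M*t + 2 \<le> dm" "L + t + 2 \<le> dm" "t*t + t + 1 \<le> dm" "2*K + 8 \<le> dm"
      using Nbdm Nbdef by linarith+
    ultimately have "\<exists>x0\<in>X. \<exists>c1 c2 c3. card (Y - N x0) \<le> c1 + c2 + c3 \<and> dm * c1 \<le> (t-1)*n
            \<and> M*c2 \<le> 2*n \<and> (dm - L)*c3 \<le> K*n"
      using core[of M K L] Kdef Ldef by blast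
    then show ?thesis using that by blast
  qed
  have dmpos: "real dm > 0" using Nbdm Nbdef by simp
  have r1: "real c1 \<le> \<epsilon> * real n"
  proof -
    have "real dm * real c1 \<le> real (t - 1) * real n" using h1 by (metis of_nat_le_iff of_nat_mult)
    also have "\<dots> \<le> real Nb * real n"
    proof -
      have "t - 1 \<le> Nb" using Nbdef by linarith
      then have "real (t - 1) \<le> real Nb" by simp
      then show ?thesis by (intro mult_right_mono) auto
    qed
    also have "\<dots> \<le> (\<epsilon> * real dm) * real n" using big by (intro mult_right_mono) auto
    finally have "real dm * real c1 \<le> real dm * (\<epsilon> * real n)" by (simp add: ac_simps)
    then show ?thesis using dmpos by simp
  qed
  have r2: "real c2 \<le> \<epsilon> * real n"
  proof -
    have "2/\<epsilon> \<le> real (nat \<lceil>2/\<epsilon>\<rceil>)" by (rule real_nat_ceiling_ge)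
    moreover have "real M = real (nat \<lceil>2/\<epsilon>\<rceil>) + 8" using Mdef by simp
    ultimately have "2/\<epsilon> \<le> real M" by linarith
    then have eM: "2 \<le> \<epsilon> * real M" using e0 by (simp add: field_simps)
    have Mpos: "real M > 0" using Mdef by simp
    have "real M * real c2 \<le> 2 * real n" using h2 by (metis of_nat_le_iff of_nat_mult of_nat_numeral)
    also have "\<dots> \<le> (\<epsilon> * real M) * real n" using eM by (intro mult_right_mono) auto
    finally have "real M * real c2 \<le> real M * (\<epsilon> * real n)" by (simp add: ac_simps)
    then show ?thesis using Mpos by simp
  qed
  have r3: "real c3 \<le> \<epsilon> * real n"
  proof -
    have Ldm: "L < dm" using Nbdm Nbdef by simp
    have d: "real (dm - L) = real dm - real L" using Ldm by simp
    have "real K \<le> \<epsilon> * (real dm - real L)"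
    proof -
      have "real K + real L \<le> real Nb" using Nbdef by simp
      moreover have "\<epsilon> * real L \<le> 1 * real L" by (rule mult_right_mono) (use e1 in auto)
      ultimately show ?thesis using big by (simp add: right_diff_distrib)
    qed
    have pos: "real (dm - L) > 0" using Ldm by simp
    have "real (dm - L) * real c3 \<le> real K * real n" using h3 by (metis of_nat_le_iff of_nat_mult)
    also have "\<dots> \<le> (\<epsilon> * real (dm - L)) * real n" using \<open>real K \<le> _\<close> d by (intro mult_right_mono) auto
    finally have "real (dm - L) * real c3 \<le> real (dm - L) * (\<epsilon> * real n)" by (simp add: ac_simps)
    then show ?thesis using pos by simp
  qed
  have NxY: "N x0 \<subseteq> Y" using NX[OF x0] .
  have "card Y = card (Y \<inter> N x0) + card (Y - N x0)" using card_Int_Diff[OF finY] by simp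
  moreover have "Y \<inter> N x0 = N x0" using NxY by auto
  ultimately have "real n = real (card (N x0)) + real (card (Y - N x0))" using cY by simp
  moreover have "real (card (Y - N x0)) \<le> real c1 + real c2 + real c3" using cs by simp
  ultimately have "(1 - 3*\<epsilon>) * real n \<le> real (card (N x0))" using r1 r2 r3 by (simp add: algebra_simps)
  then show ?thesis using x0 unfolding N_def by blast
qed

end

theorem mainTheorem14:
  "\<exists>C :: nat \<Rightarrow> real \<Rightarrow> real. \<forall>t \<epsilon>. t > 0 \<longrightarrow> 0 < \<epsilon> \<longrightarrow> \<epsilon> < 1 \<longrightarrow>
     (\<forall>(V :: nat set) E X Y n.
        simple_graph V E \<longrightarrow> connected_graph V E \<longrightarrow> bipartition V E X Y \<longrightarrow>
        card X = n \<longrightarrow> card Y = n \<longrightarrow>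
        real (min_degree V E) \<ge> 3 * C t \<epsilon> \<longrightarrow>
        \<not> has_induced_biclaw V E t t \<longrightarrow>
        real (max_degree_on V E X) \<ge> (1 - C t \<epsilon> / real (min_degree V E)) * (1 - 10 * \<epsilon>) * real n \<and>
        real (max_degree_on V E Y) \<ge> (1 - C t \<epsilon> / real (min_degree V E)) * (1 - 10 * \<epsilon>) * real n)"
proof -
  define Mf where "Mf \<epsilon> = nat \<lceil>2/\<epsilon>\<rceil> + 8" for \<epsilon> :: real
  define Kf where "Kf t \<epsilon> = t*(2*Mf \<epsilon>)^t" for t :: nat and \<epsilon> :: real
  define Lf where "Lf t \<epsilon> = t + t*Kf t \<epsilon>" for t :: nat and \<epsilon> :: real
  define Nf where "Nf t \<epsilon> = 2*Mf \<epsilon>*t + 2 + Lf t \<epsilon> + t + 2 + t*t + t + 1 + 2*Kf t \<epsilon> + 8 + Kf t \<epsilon> + Lf t \<epsilon>"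
    for t :: nat and \<epsilon> :: real
  show ?thesis
  proof (rule exI[of _ "\<lambda>t \<epsilon>. real (Nf t \<epsilon>) / \<epsilon> / 3"], intro allI impI)
    fix t :: nat and \<epsilon> :: real and V :: "nat set" and E X Y n
    assume tpos: "t > 0" and e0: "0 < \<epsilon>" and e1: "\<epsilon> < 1" and sg: "simple_graph V E"
      and conn: "connected_graph V E" and bip: "bipartition V E X Y" and cX: "card X = n" and cY: "card Y = n"
      and md: "3 * (real (Nf t \<epsilon>) / \<epsilon> / 3) \<le> real (min_degree V E)"
      and nb: "\<not> has_induced_biclaw V E t t"
    define dm where "dm = min_degree V E"
    define C where "C = real (Nf t \<epsilon>) / \<epsilon> / 3"
    have finV: "finite V" using sg unfolding simple_graph_def by auto
    have Vne: "V \<noteq> {}" using conn unfolding connected_graph_def by auto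
    have dmle: "dm \<le> card {u\<in>V. E v u}" if "v \<in> V" for v
      unfolding dm_def min_degree_def degree_def using finV that by (intro Min_le) auto
    have big: "real (Nf t \<epsilon>) \<le> \<epsilon> * real dm" using md e0 unfolding dm_def by (simp add: field_simps)
    have bip2: "bipartition V E Y X" using bip unfolding bipartition_def by blast
    have na: "\<And>x y Z W. E x y \<Longrightarrow> Z \<subseteq> {u\<in>V. E y u} - {x} \<Longrightarrow> W \<subseteq> {u\<in>V. E x u} - {y}
        \<Longrightarrow> card Z = t \<Longrightarrow> card W = t \<Longrightarrow> \<exists>z\<in>Z. \<exists>w\<in>W. E z w"
      using noanti_of[OF sg bip nb] by blast
    interpret b1: bg V E X Y n t dm
      by unfold_locales (use sg conn bip cX cY dmle na tpos in auto)
    interpret b2: bg V E Y X n t dm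
      by unfold_locales (use sg conn bip2 cX cY dmle na tpos in auto)
    obtain x0 where x0: "x0 \<in> X" "(1 - 3*\<epsilon>) * real n \<le> real (card {u\<in>V. E x0 u})"
      using b1.fin[OF e0 e1 Mf_def[of \<epsilon>] Kf_def[of t \<epsilon>] Lf_def[of t \<epsilon>] Nf_def[of t \<epsilon>] big] by blast
    obtain y0 where y0: "y0 \<in> Y" "(1 - 3*\<epsilon>) * real n \<le> real (card {u\<in>V. E y0 u})"
      using b2.fin[OF e0 e1 Mf_def[of \<epsilon>] Kf_def[of t \<epsilon>] Lf_def[of t \<epsilon>] Nf_def[of t \<epsilon>] big] by blast
    have Cnn: "0 \<le> C" using e0 C_def by simp
    have "1 \<le> real (Nf t \<epsilon>)" using Nf_def by simp
    then have "0 < \<epsilon> * real dm" using big by linarith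
    then have dmpos: "0 < real dm" using e0 by (simp add: zero_less_mult_iff)
    have key: "(1 - C / real dm) * (1 - 10 * \<epsilon>) * real n \<le> (1 - 3*\<epsilon>) * real n
       \<or> (1 - C / real dm) * (1 - 10 * \<epsilon>) * real n \<le> 0"
    proof -
      have a0: "0 \<le> 1 - C / real dm"
      proof -
        have "C \<le> real dm" using md C_def Cnn unfolding dm_def by linarith
        then show ?thesis using dmpos by (simp add: divide_le_eq_1)
      qed
      have a1: "1 - C / real dm \<le> 1" using Cnn dmpos by simp
      show ?thesis
      proof (cases "1 - 10 * \<epsilon> \<le> 0")
        case True
        then have "(1 - C / real dm) * (1 - 10 * \<epsilon>) \<le> 0" using a0 by (simp add: mult_nonneg_nonpos)
        then have "(1 - C / real dm) * (1 - 10 * \<epsilon>) * real n \<le> 0" by (simp add: mult_nonpos_nonneg)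
        then show ?thesis by simp
      next
        case False
        then have "(1 - C / real dm) * (1 - 10 * \<epsilon>) \<le> 1 - 10 * \<epsilon>" using a1
          by (simp add: mult_left_le_one_le a0 mult_le_cancel_right1)
        then have "(1 - C / real dm) * (1 - 10 * \<epsilon>) \<le> 1 - 3 * \<epsilon>" using e0 by linarith
        then have "(1 - C / real dm) * (1 - 10 * \<epsilon>) * real n \<le> (1 - 3*\<epsilon>) * real n"
          by (intro mult_right_mono) auto
        then show ?thesis by simp
      qed
    qed
    have finX: "finite X" and finY: "finite Y" using bip finV unfolding bipartition_def
      by (metis finite_Un)+
    have DX: "real (card {u\<in>V. E x0 u}) \<le> real (max_degree_on V E X)"
      unfolding max_degree_on_def using x0(1) finX by (simp add: degree_def[symmetric])
    have DY: "real (card {u\<in>V. E y0 u}) \<le> real (max_degree_on V E Y)"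
      unfolding max_degree_on_def using y0(1) finY by (simp add: degree_def[symmetric])
    have Dnn: "0 \<le> real (max_degree_on V E X)" "0 \<le> real (max_degree_on V E Y)" by simp_all
    have eqC: "real (Nf t \<epsilon>) / \<epsilon> / 3 / real (min_degree V E) = C / real dm" using C_def dm_def by simp
    show "(1 - real (Nf t \<epsilon>) / \<epsilon> / 3 / real (min_degree V E)) * (1 - 10 * \<epsilon>) * real n
          \<le> real (max_degree_on V E X) \<and>
          (1 - real (Nf t \<epsilon>) / \<epsilon> / 3 / real (min_degree V E)) * (1 - 10 * \<epsilon>) * real n
          \<le> real (max_degree_on V E Y)"
      unfolding eqC using key x0(2) y0(2) DX DY Dnn by linarith
  qed
qed


end
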